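(* Let $N\ge 2$, $\mathcal N=\{1,\dots,N\}$, $\mathcal F=\{(i,j): i<j,\ i,j\in\mathcal N\}$, $B\in\mathbb Z_{\ge0}$, $S_1,\dots,S_N\in\mathbb Z_{\ge 0}$, and let $\mathcal X\subset\mathbb Z_{\ge0}^{\mathcal F}$ be the set of integer vectors $x$ with $\sum_{(i,j)\in\mathcal F}x_{ij}\le B$ and $\sum_{j<i}x_{ji}+\sum_{j>i}x_{ij}\le S_i$ for all $i$. Let $p_{\mathrm{e2e}}\in[0,1]$ and $\Delta t>0$, and define the throughput region $$\Lambda_{\mathrm{EGS}}=\frac{p_{\mathrm{e2e}}}{\Delta t}\,\mathrm{co}(\mathcal X)=\Big\{\tfrac{p_{\mathrm{e2e}}}{\Delta t}\textstyle\sum_{x\in\mathcal X}\delta_x x:\ \sum_{x\in\mathcal X}\delta_x=1,\ \delta_x\ge 0\Big\}.$$ Then $$R^{\mathrm{sec}}_{\mathrm{EGS}}\triangleq\max_{\lambda\in\Lambda_{\mathrm{EGS}}}\sum_{(i,j)\in\mathcal F}\lambda_{ij}=\frac{p_{\mathrm{e2e}}}{\Delta t}\,\min\Big\{B,\ \Big\lfloor\tfrac12\sum_i S_i\Big\rfloor,\ \sum_i S_i-S_{\max}\Big\},$$ where $S_{\max}=\max_i S_i$.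
   Context: This models an all-photonic entanglement generation switch with $N$ clients, $B$ Bell-state analyzers, per-client multiplexing degrees $S_i$, per-slot end-to-end success probability $p_{\mathrm{e2e}}$ of a BSA assigned to a pair, and slot duration $\Delta t$; $\mathrm{co}(\cdot)$ denotes convex hull. *)

theory Defs
  imports "HOL-Analysis.Analysis"
begin

definition pairs :: "nat \<Rightarrow> (nat \<times> nat) set" where
  "pairs N = {(i,j). 1 \<le> i \<and> i < j \<and> j \<le> N}"

definition feasible :: "nat \<Rightarrow> nat \<Rightarrow> (nat \<Rightarrow> nat) \<Rightarrow> ((nat \<times> nat) \<Rightarrow> nat) set" where
  "feasible N B S = {x. (\<forall>p. p \<notin> pairs N \<longrightarrow> x p = 0)
      \<and> (\<Sum>p\<in>pairs N. x p) \<le> B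
      \<and> (\<forall>i\<in>{1..N}. (\<Sum>j\<in>{j\<in>{1..N}. j < i}. x (j,i)) + (\<Sum>j\<in>{j\<in>{1..N}. i < j}. x (i,j)) \<le> S i)}"

definition throughput_region ::
  "nat \<Rightarrow> nat \<Rightarrow> (nat \<Rightarrow> nat) \<Rightarrow> real \<Rightarrow> real \<Rightarrow> ((nat \<times> nat) \<Rightarrow> real) set" where
  "throughput_region N B S pe2e dt =
    {lam. \<exists>\<delta> :: ((nat \<times> nat) \<Rightarrow> nat) \<Rightarrow> real.
        (\<forall>x\<in>feasible N B S. 0 \<le> \<delta> x) \<and> (\<Sum>x\<in>feasible N B S. \<delta> x) = 1
      \<and> lam = (\<lambda>p. pe2e / dt * (\<Sum>x\<in>feasible N B S. \<delta> x * real (x p)))}"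

end

theory Submission imports Defs begin

definition dg :: "nat \<Rightarrow> ((nat \<times> nat) \<Rightarrow> nat) \<Rightarrow> nat \<Rightarrow> nat" where
  "dg N x i = (\<Sum>p\<in>pairs N. if fst p = i \<or> snd p = i then x p else 0)"

lemma finite_pairs: "finite (pairs N)"
proof -
  have "pairs N \<subseteq> {1..N} \<times> {1..N}" by (auto simp: pairs_def)
  thus ?thesis by (rule finite_subset) auto
qed

lemma dg_alt:
  assumes "i \<in> {1..N}"
  shows "dg N x i = (\<Sum>j\<in>{j\<in>{1..N}. j < i}. x (j,i)) + (\<Sum>j\<in>{j\<in>{1..N}. i < j}. x (i,j))"
proof -
  have fin: "finite (pairs N)" by (rule finite_pairs)
  have "dg N x i = (\<Sum>p\<in>{p\<in>pairs N. snd p = i} \<union> {p\<in>pairs N. fst p = i}. x p)"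
    unfolding dg_def by (rule sum.mono_neutral_cong_right) (use fin in auto)
  also have "\<dots> = (\<Sum>p\<in>{p\<in>pairs N. snd p = i}. x p) + (\<Sum>p\<in>{p\<in>pairs N. fst p = i}. x p)"
    by (rule sum.union_disjoint) (use fin in \<open>auto simp: pairs_def\<close>)
  also have "{p\<in>pairs N. snd p = i} = (\<lambda>j. (j,i)) ` {j\<in>{1..N}. j < i}"
    using assms by (auto simp: pairs_def)
  also have "{p\<in>pairs N. fst p = i} = (\<lambda>j. (i,j)) ` {j\<in>{1..N}. i < j}"
    using assms by (auto simp: pairs_def)
  finally show ?thesis
    by (simp add: sum.reindex inj_on_def)
qed

lemma feasible_iff:
  "x \<in> feasible N B S \<longleftrightarrow> (\<forall>p. p \<notin> pairs N \<longrightarrow> x p = 0) \<and> (\<Sum>p\<in>pairs N. x p) \<le> B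
      \<and> (\<forall>i\<in>{1..N}. dg N x i \<le> S i)"
  unfolding feasible_def by (simp add: dg_alt)

lemma sum_dg: "(\<Sum>i=1..N. dg N x i) = 2 * (\<Sum>p\<in>pairs N. x p)"
proof -
  have "(\<Sum>i=1..N. dg N x i) = (\<Sum>p\<in>pairs N. \<Sum>i=1..N. if fst p = i \<or> snd p = i then x p else 0)"
    unfolding dg_def by (rule sum.swap)
  also have "\<dots> = (\<Sum>p\<in>pairs N. 2 * x p)"
  proof (rule sum.cong)
    fix p assume p: "p \<in> pairs N"
    then obtain a b where ab: "p = (a,b)" "1 \<le> a" "a < b" "b \<le> N" by (auto simp: pairs_def)
    have "(\<Sum>i=1..N. if fst p = i \<or> snd p = i then x p else 0)
        = (\<Sum>i=1..N. (if i = a then x p else 0) + (if i = b then x p else 0))"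
      by (rule sum.cong) (use ab in auto)
    also have "\<dots> = 2 * x p" using ab by (simp add: sum.distrib)
    finally show "(\<Sum>i=1..N. if fst p = i \<or> snd p = i then x p else 0) = 2 * x p" .
  qed simp
  finally show ?thesis by (simp add: sum_distrib_left)
qed

lemma dg_le: "dg N x i \<le> (\<Sum>p\<in>pairs N. x p)"
  unfolding dg_def by (rule sum_mono) auto

lemma upper:
  assumes "x \<in> feasible N B S" "N \<ge> 2"
  shows "(\<Sum>p\<in>pairs N. x p) \<le> min B (min ((\<Sum>i=1..N. S i) div 2)
                    ((\<Sum>i=1..N. S i) - Max (S ` {1..N})))"
proof -
  let ?s = "\<Sum>p\<in>pairs N. x p"
  have f: "\<forall>i\<in>{1..N}. dg N x i \<le> S i" "?s \<le> B" using assms(1) by (auto simp: feasible_iff)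
  have T: "2 * ?s \<le> (\<Sum>i=1..N. S i)"
    unfolding sum_dg[symmetric] by (rule sum_mono) (use f in auto)
  have "Max (S ` {1..N}) \<in> S ` {1..N}" by (rule Max_in) (use assms in auto)
  then obtain m where m: "m \<in> {1..N}" "Max (S ` {1..N}) = S m" by auto
  have "(\<Sum>i=1..N. dg N x i) = dg N x m + (\<Sum>i\<in>{1..N}-{m}. dg N x i)"
    using m by (simp add: sum.remove)
  moreover have "(\<Sum>i=1..N. S i) = S m + (\<Sum>i\<in>{1..N}-{m}. S i)"
    using m by (simp add: sum.remove)
  moreover have "(\<Sum>i\<in>{1..N}-{m}. dg N x i) \<le> (\<Sum>i\<in>{1..N}-{m}. S i)"
    by (rule sum_mono) (use f in auto)
  moreover note dg_le[of N x m]
  moreover note sum_dg[of N x]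
  ultimately have "?s \<le> (\<Sum>i=1..N. S i) - S m" by linarith
  with T f m show ?thesis by simp
qed

lemma aux_ineq: "(a::nat) + b + c \<le> t \<Longrightarrow> c \<le> b \<Longrightarrow> c \<le> a \<Longrightarrow> Suc k + c \<le> t \<Longrightarrow> 2 * Suc k \<le> t \<Longrightarrow> Suc k + c < t"
proof (rule ccontr)
  assume h: "\<not> Suc k + c < t" "a + b + c \<le> t" "c \<le> b" "c \<le> a" "Suc k + c \<le> t" "2 * Suc k \<le> t"
  hence e: "t = Suc k + c" by simp
  with h have "2 * Suc k \<le> Suc k + c" by simp
  hence "Suc k \<le> c" by simp
  with h e have "a + b \<le> Suc k" by simp
  with h \<open>Suc k \<le> c\<close> show False by simp
qed

lemma exist:
  assumes N: "N \<ge> 2"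
  shows "\<And>S. 2 * K \<le> (\<Sum>i=1..N. S i) \<Longrightarrow> (\<forall>u\<in>{1..N}. K + S u \<le> (\<Sum>i=1..N. S i)) \<Longrightarrow>
    \<exists>x. (\<forall>p. p \<notin> pairs N \<longrightarrow> x p = 0) \<and> (\<Sum>p\<in>pairs N. x p) = K \<and> (\<forall>i\<in>{1..N}. dg N x i \<le> S i)"
proof (induction K)
  case 0
  show ?case by (rule exI[of _ "\<lambda>_. 0"]) (simp add: dg_def)
next
  case (Suc K S)
  let ?T = "\<Sum>i=1..N. S i"
  have "Max (S ` {1..N}) \<in> S ` {1..N}" by (rule Max_in) (use N in auto)
  then obtain m where m: "m \<in> {1..N}" "Max (S ` {1..N}) = S m" by auto
  have mmax: "S u \<le> S m" if "u \<in> {1..N}" for u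
  proof -
    have "S u \<le> Max (S ` {1..N})" by (rule Max_ge) (use that in auto)
    thus ?thesis using m(2) by simp
  qed
  have ne: "S ` ({1..N} - {m}) \<noteq> {}" proof -
    have "(if m = 1 then 2 else 1) \<in> {1..N} - {m}" using N m(1) by auto
    thus ?thesis by blast
  qed
  have "Max (S ` ({1..N} - {m})) \<in> S ` ({1..N} - {m})" by (rule Max_in) (use ne in auto)
  then obtain m' where m'0: "m' \<in> {1..N} - {m}" "Max (S ` ({1..N} - {m})) = S m'" by blast
  hence m': "m' \<in> {1..N}" "m' \<noteq> m" "Max (S ` ({1..N} - {m})) = S m'" by auto
  have m'max: "S u \<le> S m'" if "u \<in> {1..N}" "u \<noteq> m" for u
  proof -
    have "S u \<le> Max (S ` ({1..N} - {m}))" by (rule Max_ge) (use that in auto)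
    thus ?thesis using m'(3) by simp
  qed
  have Tm: "?T = S m + (\<Sum>i\<in>{1..N}-{m}. S i)" using m by (simp add: sum.remove)
  have "(\<Sum>i\<in>{1..N}-{m}. S i) \<le> (\<Sum>i\<in>{1..N}-{m}. S m')" by (rule sum_mono) (use m'max in auto)
  moreover have "Suc K + S m \<le> ?T" using Suc.prems m by auto
  ultimately have "S m' \<noteq> 0" using Tm by (intro notI) simp
  hence Sm': "S m' \<ge> 1" by simp
  have Sm: "S m \<ge> 1" using mmax[OF m'(1)] Sm' by simp
  define S' where "S' = S(m := S m - 1, m' := S m' - 1)"
  have Sdec: "\<And>i. S i = S' i + (if i = m then 1 else 0) + (if i = m' then 1 else 0)"
    unfolding S'_def using Sm Sm' m'(2) by auto
  have "?T = (\<Sum>i=1..N. S' i + (if i = m then 1 else 0) + (if i = m' then 1 else 0))"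
    by (subst Sdec) simp
  also have "\<dots> = (\<Sum>i=1..N. S' i) + 2" using m m' by (simp add: sum.distrib)
  finally have T': "?T = (\<Sum>i=1..N. S' i) + 2" .
  have c1: "2 * K \<le> (\<Sum>i=1..N. S' i)" using Suc.prems(1) T' by simp
  have c2: "\<forall>u\<in>{1..N}. K + S' u \<le> (\<Sum>i=1..N. S' i)"
  proof
    fix u assume u: "u \<in> {1..N}"
    show "K + S' u \<le> (\<Sum>i=1..N. S' i)"
    proof (cases "u = m \<or> u = m'")
      case True
      then have "S' u + 1 = S u" using Sdec[of u] m'(2) by auto
      then show ?thesis using Suc.prems(2) u T' by fastforce
    next
      case False
      hence S'u: "S' u = S u" unfolding S'_def by auto
      have "S m + S m' + S u = (\<Sum>i\<in>{m,m',u}. S i)" using False m'(2) by auto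
      also have "\<dots> \<le> ?T" by (rule sum_mono2) (use m m' u in auto)
      finally have "S m + S m' + S u \<le> ?T" .
      moreover have "S u \<le> S m'" "S u \<le> S m" using m'max[OF u] mmax[OF u] False by auto
      moreover have "Suc K + S u \<le> ?T" using Suc.prems(2) u by blast
      moreover have "2 * Suc K \<le> ?T" using Suc.prems(1) by simp
      ultimately have "Suc K + S u < ?T"
        by (rule aux_ineq)
      then show ?thesis using S'u T' by simp
    qed
  qed
  obtain x' where x': "\<forall>p. p \<notin> pairs N \<longrightarrow> x' p = 0" "(\<Sum>p\<in>pairs N. x' p) = K"
       "\<forall>i\<in>{1..N}. dg N x' i \<le> S' i"
    using Suc.IH[OF c1 c2] by blast
  define e where "e = (min m m', max m m')"
  have e: "e \<in> pairs N" using m m' unfolding e_def pairs_def by auto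
  define x where "x = (\<lambda>p. x' p + (if p = e then 1 else 0))"
  have "\<forall>p. p \<notin> pairs N \<longrightarrow> x p = 0" using x'(1) e unfolding x_def by auto
  moreover have "(\<Sum>p\<in>pairs N. x p) = Suc K"
    unfolding x_def using x'(2) e finite_pairs[of N] by (simp add: sum.distrib)
  moreover have "\<forall>i\<in>{1..N}. dg N x i \<le> S i"
  proof
    fix i assume i: "i \<in> {1..N}"
    have "dg N x i = dg N x' i + (\<Sum>p\<in>pairs N. if fst p = i \<or> snd p = i then (if p = e then 1 else 0) else 0)"
      unfolding dg_def sum.distrib[symmetric] by (rule sum.cong) (auto simp: x_def)
    also have "(\<Sum>p\<in>pairs N. if fst p = i \<or> snd p = i then (if p = e then 1 else 0) else 0)
        = (\<Sum>p\<in>pairs N. if p = e then (if i = m \<or> i = m' then 1 else 0) else 0)"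
      by (rule sum.cong) (auto simp: e_def min_def max_def)
    also have "\<dots> = (if i = m \<or> i = m' then 1 else 0)" using e finite_pairs[of N] by simp
    finally show "dg N x i \<le> S i" using x'(3) i Sdec[of i] m'(2) by auto
  qed
  ultimately show ?case by blast
qed

lemma finite_feasible: "finite (feasible N B S)"
proof -
  have sub: "(\<lambda>x. restrict x (pairs N)) ` feasible N B S \<subseteq> PiE (pairs N) (\<lambda>_. {0..B})"
  proof
    fix y assume "y \<in> (\<lambda>x. restrict x (pairs N)) ` feasible N B S"
    then obtain x where x: "x \<in> feasible N B S" "y = restrict x (pairs N)" by blast
    have "\<forall>p\<in>pairs N. x p \<le> B"
    proof
      fix p assume "p \<in> pairs N"
      hence "x p \<le> (\<Sum>q\<in>pairs N. x q)" by (intro member_le_sum) (auto simp: finite_pairs)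
      thus "x p \<le> B" using x(1) by (auto simp: feasible_def)
    qed
    thus "y \<in> PiE (pairs N) (\<lambda>_. {0..B})" using x(2) by auto
  qed
  have "finite (PiE (pairs N) (\<lambda>_. {0..B::nat}))" by (rule finite_PiE) (auto simp: finite_pairs)
  hence "finite ((\<lambda>x. restrict x (pairs N)) ` feasible N B S)" using sub by (rule finite_subset[rotated])
  moreover have "inj_on (\<lambda>x. restrict x (pairs N)) (feasible N B S)"
  proof (rule inj_onI)
    fix x y assume xy: "x \<in> feasible N B S" "y \<in> feasible N B S" "restrict x (pairs N) = restrict y (pairs N)"
    show "x = y"
    proof
      fix p
      have h: "restrict x (pairs N) p = restrict y (pairs N) p" using xy(3) by simp
      have z: "p \<notin> pairs N \<Longrightarrow> x p = 0 \<and> y p = 0" using xy(1,2) unfolding feasible_def by blast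
      show "x p = y p"
        using h z by (cases "p \<in> pairs N") auto
    qed
  qed
  ultimately show ?thesis by (rule finite_imageD)
qed

theorem theorem1:
  fixes N B :: nat and S :: "nat \<Rightarrow> nat" and pe2e dt :: real
  assumes "N \<ge> 2" and "0 \<le> pe2e" and "pe2e \<le> 1" and "dt > 0"
  defines "R \<equiv> pe2e / dt * real (min B (min ((\<Sum>i=1..N. S i) div 2)
                    ((\<Sum>i=1..N. S i) - Max (S ` {1..N}))))"
  shows "(\<exists>lam\<in>throughput_region N B S pe2e dt. (\<Sum>p\<in>pairs N. lam p) = R)
       \<and> (\<forall>lam\<in>throughput_region N B S pe2e dt. (\<Sum>p\<in>pairs N. lam p) \<le> R)"
proof -
  let ?T = "\<Sum>i=1..N. S i"
  define K where "K = min B (min (?T div 2) (?T - Max (S ` {1..N})))"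
  have R: "R = pe2e / dt * real K" unfolding R_def K_def by simp
  let ?F = "feasible N B S"
  have finF: "finite ?F" by (rule finite_feasible)
  have key: "(\<Sum>p\<in>pairs N. pe2e / dt * (\<Sum>x\<in>?F. \<delta> x * real (x p)))
      = pe2e / dt * (\<Sum>x\<in>?F. \<delta> x * real (\<Sum>p\<in>pairs N. x p))" for \<delta> :: "((nat \<times> nat) \<Rightarrow> nat) \<Rightarrow> real"
  proof -
    have "(\<Sum>p\<in>pairs N. pe2e / dt * (\<Sum>x\<in>?F. \<delta> x * real (x p)))
        = pe2e / dt * (\<Sum>p\<in>pairs N. \<Sum>x\<in>?F. \<delta> x * real (x p))" by (simp add: sum_distrib_left)
    also have "(\<Sum>p\<in>pairs N. \<Sum>x\<in>?F. \<delta> x * real (x p)) = (\<Sum>x\<in>?F. \<Sum>p\<in>pairs N. \<delta> x * real (x p))"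
      by (rule sum.swap)
    also have "\<dots> = (\<Sum>x\<in>?F. \<delta> x * real (\<Sum>p\<in>pairs N. x p))"
      by (simp add: sum_distrib_left of_nat_sum)
    finally show ?thesis .
  qed
  have ex: "\<exists>x0 \<in> ?F. (\<Sum>p\<in>pairs N. x0 p) = K"
  proof -
    have Mx: "Max (S ` {1..N}) \<le> ?T"
    proof -
      have "Max (S ` {1..N}) \<in> S ` {1..N}" by (rule Max_in) (use assms(1) in auto)
      then obtain m where "m \<in> {1..N}" "Max (S ` {1..N}) = S m" by auto
      thus ?thesis by (metis finite_atLeastAtMost member_le_sum zero_le)
    qed
    have c1: "2 * K \<le> ?T" unfolding K_def by linarith
    have c2: "\<forall>u\<in>{1..N}. K + S u \<le> ?T"
    proof
      fix u assume "u \<in> {1..N}"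
      hence "S u \<le> Max (S ` {1..N})" by (intro Max_ge) auto
      thus "K + S u \<le> ?T" using Mx unfolding K_def by linarith
    qed
    obtain x where x: "\<forall>p. p \<notin> pairs N \<longrightarrow> x p = 0" "(\<Sum>p\<in>pairs N. x p) = K" "\<forall>i\<in>{1..N}. dg N x i \<le> S i"
      using exist[OF assms(1) c1 c2] by blast
    have "x \<in> ?F" unfolding feasible_iff using x by (simp add: K_def)
    thus ?thesis using x(2) by blast
  qed
  then obtain x0 where x0: "x0 \<in> ?F" "(\<Sum>p\<in>pairs N. x0 p) = K" by blast
  have ub: "(\<Sum>p\<in>pairs N. x p) \<le> K" if "x \<in> ?F" for x
    using upper[OF that assms(1)] unfolding K_def .
  have coef: "pe2e / dt \<ge> 0" using assms by simp
  show ?thesis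
  proof
    let ?d = "\<lambda>x. if x = x0 then 1 else (0::real)"
    let ?lam = "\<lambda>p. pe2e / dt * (\<Sum>x\<in>?F. ?d x * real (x p))"
    have "?lam \<in> throughput_region N B S pe2e dt"
      unfolding throughput_region_def using finF x0(1) by (intro CollectI exI[of _ ?d]) auto
    moreover have "(\<Sum>p\<in>pairs N. ?lam p) = R"
    proof -
      have "(\<Sum>x\<in>?F. ?d x * real (\<Sum>p\<in>pairs N. x p)) = (\<Sum>x\<in>?F. if x = x0 then real (\<Sum>p\<in>pairs N. x p) else 0)"
        by (rule sum.cong) auto
      also have "\<dots> = real K" using finF x0 by simp
      finally show ?thesis unfolding key R by simp
    qed
    ultimately show "\<exists>lam\<in>throughput_region N B S pe2e dt. (\<Sum>p\<in>pairs N. lam p) = R" by blast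
  next
    show "\<forall>lam\<in>throughput_region N B S pe2e dt. (\<Sum>p\<in>pairs N. lam p) \<le> R"
    proof
      fix lam assume "lam \<in> throughput_region N B S pe2e dt"
      then obtain \<delta> where d: "\<forall>x\<in>?F. 0 \<le> \<delta> x" "(\<Sum>x\<in>?F. \<delta> x) = 1"
        "lam = (\<lambda>p. pe2e / dt * (\<Sum>x\<in>?F. \<delta> x * real (x p)))"
        unfolding throughput_region_def by blast
      have "(\<Sum>x\<in>?F. \<delta> x * real (\<Sum>p\<in>pairs N. x p)) \<le> (\<Sum>x\<in>?F. \<delta> x * real K)"
      proof (rule sum_mono)
        fix x assume x: "x \<in> ?F"
        have "real (\<Sum>p\<in>pairs N. x p) \<le> real K" using ub[OF x] by (simp only: of_nat_le_iff)
        thus "\<delta> x * real (\<Sum>p\<in>pairs N. x p) \<le> \<delta> x * real K"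
          using d(1) x by (intro mult_left_mono) auto
      qed
      also have "\<dots> = real K" using d(2) by (simp add: sum_distrib_right[symmetric])
      finally have "(\<Sum>x\<in>?F. \<delta> x * real (\<Sum>p\<in>pairs N. x p)) \<le> real K" .
      hence "pe2e / dt * (\<Sum>x\<in>?F. \<delta> x * real (\<Sum>p\<in>pairs N. x p)) \<le> pe2e / dt * real K"
        using coef by (rule mult_left_mono)
      thus "(\<Sum>p\<in>pairs N. lam p) \<le> R" unfolding d(3) key R .
    qed
  qed
qed

end
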